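(* Let $\alpha\in(0,1]$, $\mu\in(0,1]$, $\lambda>0$, and define $(c^{(\mu)}_k)_{k\ge0}$ by $\sum_{k\ge0}c^{(\mu)}_ku^k=\Big(\frac{(1-u)^\alpha}{\lambda+(1-u)^\alpha}\Big)^\mu$ for $|u|<1$. Then $c^{(\mu)}_0=(\lambda+1)^{-\mu}>0$, $c^{(\mu)}_k<0$ for all $k\ge1$, and $\sum_{k\ge0}c^{(\mu)}_k=0$. Equivalently, the upper triangular circulant matrix $[g_{ML,\alpha}(\mathcal L)]^\mu=\mathcal L^{\alpha\mu}(\lambda\mathbf 1+\mathcal L^\alpha)^{-\mu}$, which for $\mu\in(0,1)$ equals $-\frac1{\Gamma(-\mu)}\int_0^\infty(\mathbf 1-e^{-\tau g_{ML,\alpha}(\mathcal L)})\tau^{-\mu-1}d\tau$, satisfies the good Laplacian properties (zero row sums, positive diagonal, non-positive off-diagonal entries), and $\delta_{mn}-[g_{ML,\alpha}(\mathcal L)]^\mu_{m,n}/c^{(\mu)}_0$ is a transition matrix with strictly positive entries for $n>m$.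
   Context: $\mathcal L$ is the $\mathbb Z\times\mathbb Z$ matrix $\mathcal L_{mn}=\delta_{mn}-\delta_{m,n-1}$; a matrix function of $\mathcal L$ with generating function $F(1-u)=\sum_kf_ku^k$ is the upper triangular circulant matrix with entries $[F]_{m,n}=f_{n-m}$ ($n\ge m$), $0$ otherwise. $g_{ML,\alpha}(\mathcal L)$ has generating function $\frac{(1-u)^\alpha}{\lambda+(1-u)^\alpha}$. *)

theory Defs
  imports "HOL-Analysis.Analysis"
begin

text \<open>Generating function of g_ML,alpha raised to the power mu, real and complex versions
  (principal branches; 1 - u has positive real part for norm u < 1).\<close>
definition gML_pow_real :: "real \<Rightarrow> real \<Rightarrow> real \<Rightarrow> real \<Rightarrow> real" where
  "gML_pow_real \<alpha> lam \<mu> u = ((1 - u) powr \<alpha> / (lam + (1 - u) powr \<alpha>)) powr \<mu>"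

definition gML_pow_cplx :: "real \<Rightarrow> real \<Rightarrow> real \<Rightarrow> complex \<Rightarrow> complex" where
  "gML_pow_cplx \<alpha> lam \<mu> u =
     ((1 - u) powr (complex_of_real \<alpha>) / (complex_of_real lam + (1 - u) powr (complex_of_real \<alpha>)))
       powr (complex_of_real \<mu>)"

definition cML :: "real \<Rightarrow> real \<Rightarrow> real \<Rightarrow> nat \<Rightarrow> real" where
  "cML \<alpha> lam \<mu> k = (deriv ^^ k) (gML_pow_real \<alpha> lam \<mu>) 0 / fact k"

definition ut_circulant :: "(nat \<Rightarrow> real) \<Rightarrow> int \<Rightarrow> int \<Rightarrow> real" where
  "ut_circulant f m n = (if m \<le> n then f (nat (n - m)) else 0)"

end

theory Submission
  imports Defs "HOL-Complex_Analysis.Complex_Analysis" "HOL-Library.Complex_Order"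
begin


lemma gbin_sign:
  fixes a :: real assumes "0 < a" "a \<le> 1" "n \<ge> 1"
  shows "(-1)^n * (a gchoose n) \<le> 0"
proof -
  obtain m where n: "n = Suc m" using assms(3) by (cases n) auto
  have e: "(-1)^n * (a gchoose n) = pochhammer (-a) n / fact n"
    by (simp add: gbinomial_pochhammer)
  have "pochhammer (-a) n = (-a) * pochhammer (1 - a) m"
    by (simp add: n pochhammer_rec)
  also have "\<dots> \<le> 0" using assms
    by (intro mult_nonpos_nonneg) (auto simp: pochhammer_prod intro!: prod_nonneg)
  finally show ?thesis unfolding e by (simp add: divide_nonpos_pos)
qed

lemma gbin_one: "(-1::real)^1 * (a gchoose 1) = - a" by simp

lemma gbinomial_of_real: "(complex_of_real a gchoose n) = complex_of_real (a gchoose n)"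
  by (simp add: gbinomial_prod_rev of_real_prod)

lemma cpos_mult: "0 < (a::complex) \<Longrightarrow> 0 < b \<Longrightarrow> 0 < a * b"
  by (auto simp: less_complex_def)
lemma cnonneg_real: "0 \<le> complex_of_real r \<longleftrightarrow> 0 \<le> r"
  by (auto simp: less_eq_complex_def)
lemma cpos_real: "0 < complex_of_real r \<longleftrightarrow> 0 < r"
  by (auto simp: less_complex_def)
lemma cnonpos_real: "complex_of_real r \<le> 0 \<longleftrightarrow> r \<le> 0"
  by (auto simp: less_eq_complex_def)
lemma cneg_real: "complex_of_real r < 0 \<longleftrightarrow> r < 0"
  by (auto simp: less_complex_def)

definition Xf :: "real \<Rightarrow> complex fps" where
  "Xf a = fps_compose (fps_binomial (of_real a)) (-fps_X)"
definition Vf :: "real \<Rightarrow> real \<Rightarrow> complex fps" where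
  "Vf a lam = inverse (fps_const (of_real lam) + Xf a)"
definition Df :: "real \<Rightarrow> real \<Rightarrow> complex fps" where
  "Df a lam = fps_const (of_real (lam+1)) * (1 - fps_const (of_real lam) * Vf a lam) - 1"
definition Phi :: "real \<Rightarrow> real \<Rightarrow> real \<Rightarrow> complex fps" where
  "Phi a lam mu = fps_const (of_real ((lam+1) powr -mu)) * (fps_binomial (of_real mu) oo Df a lam)"

lemma Xf_nth: "fps_nth (Xf a) n = of_real ((-1)^n * (a gchoose n))"
proof -
  have "-fps_X = fps_const (-1::complex) * fps_X" by simp
  then show ?thesis unfolding Xf_def
    by (simp only: fps_nth_compose_linear fps_binomial_nth gbinomial_of_real) simp
qed

lemma Vf_pos:
  assumes "0 < a" "a \<le> 1" "0 < lam"
  shows "0 < fps_nth (Vf a lam) n"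
proof (induction n rule: less_induct)
  case (less n)
  define Den where "Den = fps_const (complex_of_real lam) + Xf a"
  have V: "fps_nth (Vf a lam) k = natfun_inverse Den k" for k
    by (simp add: Vf_def Den_def fps_inverse_def)
  have D0: "fps_nth Den 0 = of_real (lam + 1)" by (simp add: Den_def Xf_nth)
  have Di: "- fps_nth Den i = of_real (- ((-1)^i * (a gchoose i)))" if "i \<ge> 1" for i
    using that by (simp add: Den_def Xf_nth)
  have Dinn: "0 \<le> - fps_nth Den i" if "i \<ge> 1" for i
    unfolding Di[OF that] cnonneg_real using gbin_sign[OF assms(1,2) that] by simp
  show ?case
  proof (cases n)
    case 0
    have nI: "natfun_inverse Den 0 = of_real (inverse (lam+1))" using D0 by (metis fps_right_inverse_constructor.simps(1) of_real_inverse)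
    then show ?thesis using assms unfolding V 0 nI cpos_real by simp
  next
    case (Suc m)
    have "fps_nth (Vf a lam) n = of_real (inverse (lam+1)) *
            (\<Sum>i=1..Suc m. (- fps_nth Den i) * fps_nth (Vf a lam) (Suc m - i))"
      unfolding V Suc by (simp add: D0 sum_negf of_real_inverse algebra_simps)
    also have "0 < \<dots>"
    proof (rule cpos_mult)
      show "0 < complex_of_real (inverse (lam + 1))" unfolding cpos_real using assms by simp
      have "{1..Suc m} = insert 1 {2..Suc m}" by auto
      then have "(\<Sum>i=1..Suc m. (- fps_nth Den i) * fps_nth (Vf a lam) (Suc m - i))
         = (- fps_nth Den 1) * fps_nth (Vf a lam) m +
           (\<Sum>i=2..Suc m. (- fps_nth Den i) * fps_nth (Vf a lam) (Suc m - i))"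
        by simp
      also have "0 < \<dots>"
      proof (rule add_pos_nonneg)
        show "0 < - fps_nth Den 1 * fps_nth (Vf a lam) m"
          using less.IH[of m] Suc assms Di[of 1] by (intro cpos_mult) (auto simp: cpos_real)
        show "0 \<le> (\<Sum>i=2..Suc m. (- fps_nth Den i) * fps_nth (Vf a lam) (Suc m - i))"
          using less.IH Suc Dinn by (intro sum_nonneg mult_nonneg_nonneg) (auto intro: less_imp_le)
      qed
      finally show "0 < (\<Sum>i=1..Suc m. (- fps_nth Den i) * fps_nth (Vf a lam) (Suc m - i))" .
    qed
    finally show ?thesis .
  qed
qed

lemma Df_nth0: assumes "0 < lam" shows "fps_nth (Df a lam) 0 = 0"
proof -
  have "(lam + 1) * (1 - lam * inverse (lam + 1)) - 1 = 0" using assms by (simp add: field_simps)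
  then have "complex_of_real ((lam + 1) * (1 - lam * inverse (lam + 1)) - 1) = 0" by simp
  then show ?thesis unfolding Df_def Vf_def by (simp add: Xf_nth of_real_inverse)
qed

lemma Df_nth: "n \<ge> 1 \<Longrightarrow> fps_nth (Df a lam) n = - (of_real ((lam+1)*lam)) * fps_nth (Vf a lam) n"
  unfolding Df_def by (cases n) (auto simp: algebra_simps)

lemma E_nonneg:
  assumes "0 < a" "a \<le> 1" "0 < lam"
  shows "0 \<le> fps_nth (- Df a lam) n"
proof (cases "n = 0")
  case True then show ?thesis using Df_nth0[OF assms(3)] by simp
next
  case False
  then have "fps_nth (- Df a lam) n = of_real ((lam+1)*lam) * fps_nth (Vf a lam) n"
    using Df_nth[of n] by simp
  also have "0 < \<dots>"
  proof (rule cpos_mult)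
    show "0 < complex_of_real ((lam+1)*lam)" unfolding cpos_real using assms by simp
  qed (rule Vf_pos[OF assms(1-3)])
  finally show ?thesis by simp
qed

lemma E_pos:
  assumes "0 < a" "a \<le> 1" "0 < lam" "n \<ge> 1"
  shows "0 < fps_nth (- Df a lam) n"
proof -
  have "fps_nth (- Df a lam) n = of_real ((lam+1)*lam) * fps_nth (Vf a lam) n"
    using Df_nth[OF assms(4)] by simp
  also have "0 < \<dots>"
  proof (rule cpos_mult)
    show "0 < complex_of_real ((lam+1)*lam)" unfolding cpos_real using assms by simp
  qed (rule Vf_pos[OF assms(1-3)])
  finally show ?thesis .
qed

lemma fps_pow_nonneg:
  fixes E :: "complex fps"
  assumes "\<And>n. 0 \<le> fps_nth E n"
  shows "0 \<le> fps_nth (E ^ i) n"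
proof (induction i arbitrary: n)
  case 0 then show ?case by (simp add: less_eq_complex_def)
next
  case (Suc i)
  show ?case unfolding power_Suc fps_mult_nth
    by (intro sum_nonneg mult_nonneg_nonneg assms Suc.IH)
qed

lemma neg_pow_nth: "fps_nth ((- E) ^ i) n = (-1)^i * fps_nth (E ^ i :: complex fps) n"
proof -
  have m1: "(-1::complex fps) = fps_const (-1)" by simp
  have "(- E) ^ i = fps_const ((-1)^i) * E ^ i"
    by (subst power_minus) (simp only: m1 fps_const_power)
  then show ?thesis by (simp only: fps_mult_left_const_nth)
qed

lemma Phi_nth0: "fps_nth (Phi a lam mu) 0 = of_real ((lam+1) powr -mu)"
  by (simp add: Phi_def)

lemma Phi_neg:
  assumes "0 < a" "a \<le> 1" "0 < lam" "0 < mu" "mu \<le> 1" "n \<ge> 1"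
  shows "fps_nth (Phi a lam mu) n < 0"
proof -
  define E where "E = - Df a lam"
  have DE: "Df a lam = - E" by (simp add: E_def)
  have Enn: "0 \<le> fps_nth E k" for k unfolding E_def using E_nonneg[OF assms(1-3)] .
  have trm: "fps_nth (fps_binomial (of_real mu)) i * fps_nth (Df a lam ^ i) n
      = of_real ((-1)^i * (mu gchoose i)) * fps_nth (E ^ i) n" for i
    unfolding DE neg_pow_nth by (simp add: gbinomial_of_real)
  have S: "fps_nth (fps_binomial (of_real mu) oo Df a lam) n =
     (\<Sum>i=0..n. of_real ((-1)^i * (mu gchoose i)) * fps_nth (E ^ i) n)"
    unfolding fps_compose_nth trm ..
  have split: "{0..n} = insert 1 ({0..n} - {1})" using assms(6) by auto
  have "(\<Sum>i=0..n. of_real ((-1)^i * (mu gchoose i)) * fps_nth (E ^ i) n) =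
        of_real (- mu) * fps_nth E n +
        (\<Sum>i\<in>{0..n}-{1}. of_real ((-1)^i * (mu gchoose i)) * fps_nth (E ^ i) n)"
    by (subst split, subst sum.insert) auto
  also have "\<dots> < 0"
  proof (rule add_neg_nonpos)
    have "0 < fps_nth E n" unfolding E_def using E_pos[OF assms(1-3,6)] .
    then show "of_real (- mu) * fps_nth E n < 0" using assms(4)
      by (auto simp: less_complex_def)
    show "(\<Sum>i\<in>{0..n}-{1}. of_real ((-1)^i * (mu gchoose i)) * fps_nth (E ^ i) n) \<le> 0"
    proof (rule sum_nonpos)
      fix i assume i: "i \<in> {0..n}-{1}"
      show "of_real ((-1)^i * (mu gchoose i)) * fps_nth (E ^ i) n \<le> 0"
      proof (cases "i = 0")
        case True then show ?thesis using assms(6) by simp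
      next
        case False
        have "complex_of_real ((-1)^i * (mu gchoose i)) \<le> 0"
          unfolding cnonpos_real using gbin_sign[OF assms(4,5)] False by simp
        then show ?thesis using fps_pow_nonneg[OF Enn, of i n]
          by (simp add: mult_nonpos_nonneg)
      qed
    qed
  qed
  finally have "fps_nth (fps_binomial (of_real mu) oo Df a lam) n < 0" unfolding S .
  moreover have "0 < complex_of_real ((lam+1) powr -mu)" unfolding cpos_real using assms(3) by simp
  ultimately show ?thesis unfolding Phi_def using assms(3)
    by (auto simp: less_complex_def mult_pos_neg)
qed



lemma ReX_pos:
  assumes "0 < a" "a \<le> 1" "0 < Re z"
  shows "0 < Re (z powr complex_of_real a)"
proof -
  have z0: "z \<noteq> 0" using assms by auto
  have "z powr complex_of_real a = exp (complex_of_real a * Ln z)" using z0 by (simp add: powr_def)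
  then have "Re (z powr complex_of_real a) = exp (a * Re (Ln z)) * cos (a * Im (Ln z))"
    by (simp add: Re_exp)
  moreover have "cos (a * Im (Ln z)) > 0"
  proof (rule cos_gt_zero_pi)
    have "\<bar>Im (Ln z)\<bar> < pi/2" using Re_Ln_pos_lt_imp[OF assms(3)] .
    moreover have "a * \<bar>Im (Ln z)\<bar> \<le> \<bar>Im (Ln z)\<bar>"
      using assms by (intro mult_left_le_one_le) auto
    ultimately have "\<bar>a * Im (Ln z)\<bar> < pi/2"
      using assms by (simp add: abs_mult)
    then show "- (pi/2) < a * Im (Ln z)" "a * Im (Ln z) < pi/2" by auto
  qed
  ultimately show ?thesis by simp
qed

lemma Rew_pos:
  assumes "0 < lam" "0 < Re x"
  shows "0 < Re (x / (complex_of_real lam + x))"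
proof -
  have d: "complex_of_real lam + x \<noteq> 0" using assms by (auto simp: complex_eq_iff)
  have "Re (x / (complex_of_real lam + x)) =
        (Re x * (lam + Re x) + Im x * Im x) / ((lam + Re x)^2 + (Im x)^2)"
    by (simp add: Re_divide power2_eq_square)
  moreover have "0 < Re x * (lam + Re x) + Im x * Im x" using assms
    by (intro add_pos_nonneg mult_pos_pos) auto
  moreover have "0 < (lam + Re x)^2 + (Im x)^2" using assms by (intro add_pos_nonneg) auto
  ultimately show ?thesis by simp
qed

lemma Re_one_minus: "norm (u::complex) < 1 \<Longrightarrow> 0 < Re (1 - u)"
  using complex_Re_le_cmod[of u] by simp

lemma gML_hol:
  assumes "0 < a" "a \<le> 1" "0 < lam"
  shows "gML_pow_cplx a lam mu holomorphic_on ball 0 1"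
proof -
  have RX: "0 < Re ((1 - u) powr complex_of_real a)" if "u \<in> ball 0 1" for u
    using ReX_pos[OF assms(1,2) Re_one_minus] that by simp
  have RW: "0 < Re ((1 - u) powr complex_of_real a /
                (complex_of_real lam + (1 - u) powr complex_of_real a))" if "u \<in> ball 0 1" for u
    using Rew_pos[OF assms(3) RX[OF that]] .
  have hX: "(\<lambda>u. (1 - u) powr complex_of_real a) holomorphic_on ball 0 1"
    by (intro holomorphic_on_powr holomorphic_intros)
       (auto simp: complex_nonpos_Reals_iff dest!: Re_one_minus)
  have hW: "(\<lambda>u. (1 - u) powr complex_of_real a /
                (complex_of_real lam + (1 - u) powr complex_of_real a)) holomorphic_on ball 0 1"
  proof (rule holomorphic_on_divide[OF hX])
    show "(\<lambda>u. complex_of_real lam + (1 - u) powr complex_of_real a) holomorphic_on ball 0 1"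
      by (intro holomorphic_on_add holomorphic_on_const hX)
  next
    fix u :: complex assume "u \<in> ball 0 1"
    from RX[OF this] assms(3) show "complex_of_real lam + (1 - u) powr complex_of_real a \<noteq> 0"
      by (auto simp: complex_eq_iff)
  qed
  show ?thesis unfolding gML_pow_cplx_def
    by (rule holomorphic_on_powr[OF hW holomorphic_on_const])
       (use RW in \<open>fastforce simp: complex_nonpos_Reals_iff\<close>)
qed

lemma powr_split_real:
  fixes z :: complex
  assumes "0 < r" "z \<noteq> 0"
  shows "(complex_of_real r * z) powr complex_of_real mu = complex_of_real (r powr mu) * z powr complex_of_real mu"
proof -
  have "complex_of_real r * z \<noteq> 0" using assms by simp
  then have "(complex_of_real r * z) powr complex_of_real mu = exp (of_real mu * Ln (complex_of_real r * z))"
    by (simp add: powr_def)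
  also have "Ln (complex_of_real r * z) = of_real (ln r) + Ln z"
    using assms by (simp add: Ln_times_of_real Ln_of_real)
  also have "exp (of_real mu * (of_real (ln r) + Ln z)) = exp (of_real (mu * ln r)) * exp (of_real mu * Ln z)"
    by (simp add: distrib_left exp_add)
  also have "exp (of_real (mu * ln r)) = complex_of_real (r powr mu)"
    using assms unfolding exp_of_real by (simp add: powr_def mult.commute)
  also have "exp (of_real mu * Ln z) = z powr complex_of_real mu"
    using assms by (simp add: powr_def)
  finally show ?thesis .
qed

lemma key_identity:
  assumes "0 < a" "a \<le> 1" "0 < lam" "norm u < 1"
  shows "gML_pow_cplx a lam mu u = complex_of_real ((lam+1) powr -mu) *
     (1 + (complex_of_real (lam+1) * (1 - complex_of_real lam *
       inverse (complex_of_real lam + (1 - u) powr complex_of_real a)) - 1)) powr complex_of_real mu"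
proof -
  define X where "X = (1 - u) powr complex_of_real a"
  have RX: "0 < Re X" unfolding X_def using ReX_pos[OF assms(1,2) Re_one_minus[OF assms(4)]] .
  have den: "complex_of_real lam + X \<noteq> 0" using RX assms(3) by (auto simp: complex_eq_iff)
  define w where "w = X / (complex_of_real lam + X)"
  have w0: "w \<noteq> 0" using Rew_pos[OF assms(3) RX] unfolding w_def by auto
  have z: "1 + (complex_of_real (lam+1) * (1 - complex_of_real lam * inverse (complex_of_real lam + X)) - 1)
       = complex_of_real (lam+1) * w"
    using den unfolding w_def by (simp add: field_simps)
  have l1: "1 + complex_of_real lam \<noteq> 0" using assms(3) by (simp add: complex_eq_iff)
  have wz: "w = complex_of_real (inverse (lam+1)) * (complex_of_real (lam+1) * w)"
    using l1 by (simp add: field_simps)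
  have "gML_pow_cplx a lam mu u = w powr complex_of_real mu"
    by (simp add: gML_pow_cplx_def w_def X_def)
  also have "\<dots> = complex_of_real (inverse (lam+1) powr mu) * (complex_of_real (lam+1) * w) powr complex_of_real mu"
    by (subst wz, rule powr_split_real) (use assms(3) w0 l1 in \<open>auto simp: add.commute\<close>)
  also have "inverse (lam+1) powr mu = (lam+1) powr -mu"
    using assms(3) by (simp add: powr_minus inverse_powr)
  finally show ?thesis unfolding z[symmetric] X_def .
qed

lemma gML_fps:
  assumes "0 < a" "a \<le> 1" "0 < lam"
  shows "gML_pow_cplx a lam mu has_fps_expansion Phi a lam mu"
proof -
  have "((\<lambda>x. (1 + x) powr complex_of_real a) \<circ> (\<lambda>u. -u)) has_fps_expansion
          (fps_binomial (complex_of_real a) oo (- fps_X))"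
    by (intro has_fps_expansion_compose has_fps_expansion_binomial_complex
          has_fps_expansion_minus has_fps_expansion_fps_X) simp
  moreover have "((\<lambda>x. (1 + x) powr complex_of_real a) \<circ> (\<lambda>u. -u)) = (\<lambda>u. (1 - u) powr complex_of_real a)"
    by (auto simp: o_def)
  ultimately have e1: "(\<lambda>u. (1 - u) powr complex_of_real a) has_fps_expansion Xf a"
    by (simp add: Xf_def)
  have e2: "(\<lambda>u. inverse (complex_of_real lam + (1 - u) powr complex_of_real a)) has_fps_expansion Vf a lam"
    unfolding Vf_def
  proof (intro has_fps_expansion_inverse has_fps_expansion_add has_fps_expansion_const e1)
    show "fps_nth (fps_const (complex_of_real lam) + Xf a) 0 \<noteq> 0"
      using assms(3) by (simp add: Xf_nth complex_eq_iff)
  qed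
  define Dfun where "Dfun = (\<lambda>u. complex_of_real (lam+1) * (1 - complex_of_real lam *
       inverse (complex_of_real lam + (1 - u) powr complex_of_real a)) - 1)"
  have e3: "Dfun has_fps_expansion Df a lam"
    unfolding Dfun_def Df_def
    by (intro has_fps_expansion_diff has_fps_expansion_cmult_left has_fps_expansion_1 e2)
  have e4: "((\<lambda>x. (1 + x) powr complex_of_real mu) \<circ> Dfun) has_fps_expansion
      (fps_binomial (complex_of_real mu) oo Df a lam)"
    by (intro has_fps_expansion_compose has_fps_expansion_binomial_complex e3 Df_nth0 assms)
  have e5: "(\<lambda>u. complex_of_real ((lam+1) powr -mu) * ((\<lambda>x. (1 + x) powr complex_of_real mu) \<circ> Dfun) u)
     has_fps_expansion Phi a lam mu"
    unfolding Phi_def by (rule has_fps_expansion_cmult_left[OF e4])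
  have "\<forall>\<^sub>F u in nhds 0. u \<in> ball (0::complex) 1" by (intro eventually_nhds_in_open) auto
  then have "\<forall>\<^sub>F u in nhds 0. gML_pow_cplx a lam mu u =
      complex_of_real ((lam+1) powr -mu) * ((\<lambda>x. (1 + x) powr complex_of_real mu) \<circ> Dfun) u"
    by eventually_elim (use key_identity[OF assms] in \<open>simp add: Dfun_def\<close>)
  then show ?thesis using e5 by (subst has_fps_expansion_cong) auto
qed



lemma Re_real_deriv:
  assumes "(F has_field_derivative D) (at (complex_of_real x))"
  shows "((\<lambda>t. Re (F (complex_of_real t))) has_real_derivative Re D) (at x)"
proof -
  from has_vector_derivative_real_field[OF assms]
  have "((\<lambda>t. F (complex_of_real t)) has_derivative (\<lambda>t. t *\<^sub>R D)) (at x)"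
    unfolding has_vector_derivative_def .
  then have "((\<lambda>t. Re (F (complex_of_real t))) has_derivative (\<lambda>t. Re (t *\<^sub>R D))) (at x)"
    by (rule bounded_linear.has_derivative[OF bounded_linear_Re])
  moreover have "(\<lambda>t. Re (t *\<^sub>R D)) = (*) (Re D)" by (auto simp: mult.commute)
  ultimately show ?thesis by (simp add: has_field_derivative_def)
qed

lemma higher_deriv_real_Re:
  fixes f :: "real \<Rightarrow> real" and F :: "complex \<Rightarrow> complex"
  assumes hol: "F holomorphic_on ball 0 1"
    and eq: "\<And>x. \<bar>x\<bar> < 1 \<Longrightarrow> f x = Re (F (complex_of_real x))"
  shows "\<bar>x\<bar> < 1 \<Longrightarrow> (deriv ^^ k) f x = Re ((deriv ^^ k) F (complex_of_real x))"
proof (induction k arbitrary: x)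
  case 0 then show ?case using eq by simp
next
  case (Suc k)
  define H where "H = (deriv ^^ k) F"
  have hH: "H holomorphic_on ball 0 1" unfolding H_def by (rule holomorphic_higher_deriv[OF hol]) auto
  have xin: "complex_of_real x \<in> ball 0 1" using Suc.prems by simp
  have dH: "(H has_field_derivative deriv H (complex_of_real x)) (at (complex_of_real x))"
    by (rule holomorphic_derivI[OF hH _ xin]) auto
  have d1: "((\<lambda>t. Re (H (complex_of_real t))) has_real_derivative Re (deriv H (complex_of_real x))) (at x)"
    by (rule Re_real_deriv[OF dH])
  have ev: "\<forall>\<^sub>F t in nhds x. (deriv ^^ k) f t = Re (H (complex_of_real t))"
  proof -
    have "\<forall>\<^sub>F t in nhds x. t \<in> {-1<..<1::real}"
      using Suc.prems by (intro eventually_nhds_in_open) auto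
    then show ?thesis by eventually_elim (use Suc.IH in \<open>auto simp: H_def\<close>)
  qed
  have "((deriv ^^ k) f has_real_derivative Re (deriv H (complex_of_real x))) (at x)"
    using d1 by (subst DERIV_cong_ev[OF refl ev refl])
  then have "deriv ((deriv ^^ k) f) x = Re (deriv H (complex_of_real x))"
    by (rule DERIV_imp_deriv)
  then show ?case by (simp add: H_def)
qed



lemma cplx_real:
  assumes "0 < lam" "x < 1"
  shows "gML_pow_cplx a lam mu (complex_of_real x) = complex_of_real (gML_pow_real a lam mu x)"
proof -
  have e1: "1 - complex_of_real x = complex_of_real (1 - x)" by simp
  have p1: "(1 - complex_of_real x) powr complex_of_real a = complex_of_real ((1-x) powr a)"
    unfolding e1 using assms by (intro powr_of_real) simp
  have q: "(1 - complex_of_real x) powr complex_of_real a /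
      (complex_of_real lam + (1 - complex_of_real x) powr complex_of_real a)
      = complex_of_real ((1-x) powr a / (lam + (1-x) powr a))"
    unfolding p1 of_real_add[symmetric] of_real_divide[symmetric] ..
  have nn: "0 \<le> (1-x) powr a / (lam + (1-x) powr a)" using assms by simp
  show ?thesis unfolding gML_pow_cplx_def gML_pow_real_def q
    by (rule powr_of_real[OF nn])
qed

lemma abel_neg:
  fixes f :: "real \<Rightarrow> real" and c :: "nat \<Rightarrow> real"
  assumes S: "\<And>x. 0 \<le> x \<Longrightarrow> x < 1 \<Longrightarrow> (\<lambda>k. c k * x^k) sums f x"
    and neg: "\<And>k. k \<ge> 1 \<Longrightarrow> c k \<le> 0"
    and lim: "(f \<longlongrightarrow> 0) (at_left 1)"
  shows "c sums 0"
proof -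
  have evx: "\<forall>\<^sub>F x in at_left (1::real). x \<in> {0<..<1}" by (rule eventually_at_left_real) simp
  have part: "0 \<le> (\<Sum>k<N. c k)" for N
  proof (cases "N = 0")
    case True then show ?thesis by simp
  next
    case False
    have le: "f x \<le> (\<Sum>k<N. c k * x^k)" if "0 \<le> x" "x < 1" for x
    proof -
      have s1: "(\<lambda>i. c (i + N) * x^(i + N)) sums (f x - (\<Sum>k<N. c k * x^k))"
        using sums_split_initial_segment[OF S[OF that]] .
      have t: "c (i + N) * x^(i + N) \<le> 0" for i
        using neg[of "i+N"] False that by (intro mult_nonpos_nonneg) auto
      have "f x - (\<Sum>k<N. c k * x^k) \<le> 0"
        by (rule sums_le[OF t s1 sums_zero])
      then show ?thesis by simp
    qed
    have t1: "((\<lambda>x. \<Sum>k<N. c k * x^k) \<longlongrightarrow> (\<Sum>k<N. c k * 1^k)) (at_left 1)"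
      by (intro tendsto_intros)
    have "0 \<le> (\<Sum>k<N. c k * 1^k)"
      by (rule tendsto_le[OF trivial_limit_at_left_real t1 lim])
         (use evx in \<open>eventually_elim, use le in auto\<close>)
    then show ?thesis by simp
  qed
  define g where "g k = (if k = 0 then 0 else - c k)" for k
  have gnn: "0 \<le> g k" for k using neg[of k] by (auto simp: g_def)
  have gsum: "(\<Sum>k<N. g k) = (if N = 0 then 0 else c 0 - (\<Sum>k<N. c k))" for N
  proof (induction N)
    case (Suc N) then show ?case by (cases N) (auto simp: g_def)
  qed simp
  have "(\<Sum>k<N. g k) \<le> \<bar>c 0\<bar>" for N using part[of N] by (auto simp: gsum)
  then have sg: "summable g" by (intro summableI_nonneg_bounded[OF gnn])
  have ceq: "c = (\<lambda>k. (if k = 0 then c 0 else 0) - g k)" by (auto simp: g_def)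
  have sc: "summable c"
    by (subst ceq, intro summable_diff sg) simp
  define L where "L = suminf c"
  have cs: "c sums L" using sc by (simp add: L_def summable_sums)
  have "L \<ge> 0"
    using LIMSEQ_le_const[OF summable_LIMSEQ[OF sc], of 0] part by (auto simp: L_def)
  moreover have "L \<le> 0"
  proof -
    have le: "L \<le> f x" if "0 \<le> x" "x < 1" for x
    proof (rule sums_le[OF _ cs S[OF that]])
      fix k
      show "c k \<le> c k * x^k"
      proof (cases "k = 0")
        case False
        have "x^k \<le> 1" using that by (intro power_le_one) auto
        then show ?thesis using neg[of k] False
          by (metis mult.right_neutral mult_left_mono_neg less_one not_less)
      qed simp
    qed
    show ?thesis
      by (rule tendsto_le[OF trivial_limit_at_left_real lim tendsto_const])
         (use evx in \<open>eventually_elim, use le in auto\<close>)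
  qed
  ultimately show ?thesis using cs by simp
qed



theorem mainTheorem16:
  fixes \<alpha> \<mu> lam :: real
  assumes "0 < \<alpha>" "\<alpha> \<le> 1" "0 < \<mu>" "\<mu> \<le> 1" "0 < lam"
  defines "c \<equiv> cML \<alpha> lam \<mu>"
  defines "G \<equiv> ut_circulant c"
  defines "P \<equiv> (\<lambda>m n. (if m = n then 1 else 0) - G m n / c 0)"
  shows "(\<forall>u::complex. norm u < 1 \<longrightarrow>
            (\<lambda>k. complex_of_real (c k) * u ^ k) sums gML_pow_cplx \<alpha> lam \<mu> u)
       \<and> c 0 = (lam + 1) powr (- \<mu>) \<and> c 0 > 0
       \<and> (\<forall>k\<ge>1. c k < 0)
       \<and> c sums 0
       \<and> (\<forall>m. (G m has_sum 0) UNIV)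
       \<and> (\<forall>m. G m m > 0)
       \<and> (\<forall>m n. m \<noteq> n \<longrightarrow> G m n \<le> 0)
       \<and> (\<forall>m n. P m n \<ge> 0)
       \<and> (\<forall>m. (P m has_sum 1) UNIV)
       \<and> (\<forall>m n. m < n \<longrightarrow> P m n > 0)"
proof -
  define F where "F = gML_pow_cplx \<alpha> lam \<mu>"
  define f where "f = gML_pow_real \<alpha> lam \<mu>"
  have hol: "F holomorphic_on ball 0 1" unfolding F_def using gML_hol assms by blast
  have fps: "F has_fps_expansion Phi \<alpha> lam \<mu>" unfolding F_def using gML_fps assms by blast
  have feq: "f x = Re (F (complex_of_real x))" if "\<bar>x\<bar> < 1" for x
    using cplx_real[of lam x \<alpha> \<mu>] assms that by (simp add: F_def f_def)
  have cRe: "c k = Re (fps_nth (Phi \<alpha> lam \<mu>) k)" for k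
  proof -
    have "c k = (deriv ^^ k) f 0 / fact k" by (simp add: c_def cML_def f_def)
    also have "(deriv ^^ k) f 0 = Re ((deriv ^^ k) F (complex_of_real 0))"
      by (rule higher_deriv_real_Re[OF hol feq]) auto
    also have "Re ((deriv ^^ k) F (complex_of_real 0)) / fact k = Re ((deriv ^^ k) F 0 / fact k)"
    proof -
      have "(fact k :: complex) = complex_of_real (fact k)" by simp
      then show ?thesis by (simp only: Re_divide_of_real of_real_0)
    qed
    also have "(deriv ^^ k) F 0 / fact k = fps_nth (Phi \<alpha> lam \<mu>) k"
      using fps_nth_fps_expansion[OF fps] by simp
    finally show ?thesis .
  qed
  have c0: "c 0 = (lam + 1) powr (- \<mu>)" using cRe[of 0] by (simp add: Phi_nth0)
  have cneg: "c k < 0" if "k \<ge> 1" for k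
    using Phi_neg[OF assms(1,2,5,3,4) that] cRe[of k] by (simp add: less_complex_def)
  have creal: "complex_of_real (c k) = fps_nth (Phi \<alpha> lam \<mu>) k" for k
  proof (cases "k = 0")
    case True then show ?thesis using c0 by (simp add: Phi_nth0)
  next
    case False
    then have "fps_nth (Phi \<alpha> lam \<mu>) k < 0" using Phi_neg[OF assms(1,2,5,3,4)] by simp
    then show ?thesis using cRe[of k] by (simp add: less_complex_def complex_eq_iff)
  qed
  have S1: "(\<lambda>k. complex_of_real (c k) * u ^ k) sums F u" if "norm u < 1" for u
  proof -
    have "(\<lambda>n. (deriv ^^ n) F 0 / fact n * (u - 0) ^ n) sums F u"
      by (rule holomorphic_power_series[OF hol]) (use that in simp)
    moreover have "(deriv ^^ n) F 0 / fact n = complex_of_real (c n)" for n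
      using fps_nth_fps_expansion[OF fps, of n] creal[of n] by simp
    ultimately show ?thesis by simp
  qed
  have c0pos: "c 0 > 0" using c0 assms by simp
  have Sr: "(\<lambda>k. c k * x^k) sums f x" if "0 \<le> x" "x < 1" for x
  proof -
    have "(\<lambda>k. complex_of_real (c k) * (complex_of_real x) ^ k) sums F (complex_of_real x)"
      by (rule S1) (use that in simp)
    moreover have "F (complex_of_real x) = complex_of_real (f x)"
      using cplx_real[of lam x \<alpha> \<mu>] assms that by (simp add: F_def f_def)
    ultimately have "(\<lambda>k. complex_of_real (c k * x^k)) sums complex_of_real (f x)" by simp
    then show ?thesis by (simp only: sums_of_real_iff)
  qed
  have flim: "(f \<longlongrightarrow> 0) (at_left 1)"
  proof -
    have evx: "\<forall>\<^sub>F x in at_left (1::real). x \<in> {0<..<1}" by (rule eventually_at_left_real) simp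
    have l1: "((\<lambda>x::real. 1 - x) \<longlongrightarrow> 0) (at_left 1)"
      by (rule tendsto_eq_intros)+ (auto simp: filterlim_at)
    have l2: "((\<lambda>x::real. (1 - x) powr \<alpha>) \<longlongrightarrow> 0) (at_left 1)"
      by (rule tendsto_zero_powrI[OF l1 tendsto_const]) (use evx assms in \<open>auto elim: eventually_mono\<close>)
    have l3: "((\<lambda>x::real. (1 - x) powr \<alpha> / (lam + (1 - x) powr \<alpha>)) \<longlongrightarrow> 0 / (lam + 0)) (at_left 1)"
      using assms by (intro tendsto_intros l2) auto
    have l4: "((\<lambda>x::real. ((1 - x) powr \<alpha> / (lam + (1 - x) powr \<alpha>)) powr \<mu>) \<longlongrightarrow> 0) (at_left 1)"
      by (rule tendsto_zero_powrI[OF _ tendsto_const]) (use l3 evx assms in \<open>auto elim: eventually_mono\<close>)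
    moreover have "f = (\<lambda>x::real. ((1 - x) powr \<alpha> / (lam + (1 - x) powr \<alpha>)) powr \<mu>)"
      by (simp add: f_def gML_pow_real_def fun_eq_iff)
    ultimately show ?thesis by simp
  qed
  have csum: "c sums 0"
    by (rule abel_neg[OF Sr _ flim]) (use cneg in \<open>auto intro: less_imp_le\<close>)
  have chas: "(c has_sum 0) UNIV"
  proof (rule norm_summable_imp_has_sum[OF _ csum])
    have sm: "summable (\<lambda>k. - c k)" using csum by (intro summable_minus) (auto simp: sums_iff)
    have ev: "\<forall>\<^sub>F k in sequentially. - c k = norm (c k)"
      using eventually_ge_at_top[of 1] by eventually_elim (use cneg in \<open>auto simp: less_imp_le\<close>)
    show "summable (\<lambda>k. norm (c k))" using summable_cong[OF ev] sm by simp
  qed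
  have Ghas: "(G m has_sum 0) UNIV" for m
  proof -
    have bij: "bij_betw (\<lambda>k::nat. m + int k) UNIV {m..}"
      by (rule bij_betwI[where g = "\<lambda>n. nat (n - m)"]) auto
    have "((\<lambda>k. G m (m + int k)) has_sum 0) UNIV"
      using chas by (simp add: G_def ut_circulant_def)
    then have "(G m has_sum 0) {m..}" using has_sum_reindex_bij_betw[OF bij] by blast
    then show ?thesis
      by (rule has_sum_cong_neutral[THEN iffD1, rotated -1]) (auto simp: G_def ut_circulant_def)
  qed
  have Gdiag: "G m m > 0" for m using c0pos by (simp add: G_def ut_circulant_def)
  have Goff: "G m n \<le> 0" if "m \<noteq> n" for m n
  proof (cases "m \<le> n")
    case True
    then have "nat (n - m) \<ge> 1" using that by auto
    then show ?thesis using cneg True by (auto simp: G_def ut_circulant_def less_imp_le)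
  qed (simp add: G_def ut_circulant_def)
  have Pnn: "P m n \<ge> 0" for m n
  proof (cases "m = n")
    case True then show ?thesis using c0pos by (simp add: P_def G_def ut_circulant_def)
  next
    case False then show ?thesis using Goff[OF False] c0pos by (simp add: P_def divide_nonpos_pos)
  qed
  have Phas: "(P m has_sum 1) UNIV" for m
  proof -
    have h1: "((\<lambda>n. if m = n then 1 else 0 :: real) has_sum 1) UNIV"
      by (rule has_sum_finite_neutralI[where B = "{m}"]) auto
    have h2: "((\<lambda>n. G m n / (- c 0)) has_sum 0 / (- c 0)) UNIV"
      by (rule has_sum_divide_const[OF Ghas])
    have "((\<lambda>n. (if m = n then 1 else 0) + G m n / (- c 0)) has_sum (1 + 0 / (- c 0))) UNIV"
      by (rule has_sum_add[OF h1 h2])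
    then show ?thesis by (simp add: P_def)
  qed
  have Ppos: "P m n > 0" if "m < n" for m n
  proof -
    have "nat (n - m) \<ge> 1" using that by auto
    then have "c (nat (n - m)) < 0" by (rule cneg)
    then show ?thesis using that c0pos by (simp add: P_def G_def ut_circulant_def divide_neg_pos)
  qed
  show ?thesis
    using S1 c0 c0pos cneg csum Ghas Gdiag Goff Pnn Phas Ppos by (simp add: F_def)
qed

end
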